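(* Assume the setting below with general missingness: the $M_i(1),M_i(0)\in\{0,1\}$ are arbitrary constants whose values may depend on the potential outcomes in an arbitrary way. Fix $\boldsymbol\delta\in\mathbb R^n$ and a constant $b\in\mathbb R$, and define $\tilde{\boldsymbol Y}^{\texttt{g}}_{\boldsymbol Z,\boldsymbol\delta,b}(0)\in\overline{\mathbb R}^n$ by $$\tilde Y^{\texttt{g}}_{\boldsymbol Z,\boldsymbol\delta,b,i}(0)=\begin{cases}\min\{Y_i-\delta_i,b\},& Z_i=1,\ M_i=1,\\ -\infty,& Z_i=1,\ M_i=0,\\ Y_i,& Z_i=0,\ M_i=1,\\ b,& Z_i=0,\ M_i=0,\end{cases}\qquad 1\le i\le n.$$ Then $\tilde p^{\texttt{g}}_{\boldsymbol Z,\boldsymbol\delta,b}:=G_{\mathrm R,\phi}\big(t_{\mathrm R,\phi}(\boldsymbol Z,\tilde{\boldsymbol Y}^{\texttt{g}}_{\boldsymbol Z,\boldsymbol\delta,b}(0))\big)$ is a valid p-value for $H_{\boldsymbol\delta}:\boldsymbol\tau=\boldsymbol\delta$: if $H_{\boldsymbol\delta}$ holds then $\mathbb P(\tilde p^{\texttt{g}}_{\boldsymbol Z,\boldsymbol\delta,b}\le\alpha)\le\alpha$ for every $\alpha\in(0,1)$.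
   Context: There are $n$ units. Unit $i$ has fixed potential outcomes $Y_i^\star(0),Y_i^\star(1)\in\mathbb R$ and fixed potential missingness indicators $M_i(0),M_i(1)\in\{0,1\}$; $\tau_i=Y_i^\star(1)-Y_i^\star(0)$, $\boldsymbol\tau=(\tau_1,\dots,\tau_n)^\intercal$. The assignment $\boldsymbol Z\in\{0,1\}^n$ is drawn from a completely randomized experiment (CRE): for fixed positive integers $n_1,n_0$ with $n_1+n_0=n$, $\boldsymbol Z$ is uniform over vectors in $\{0,1\}^n$ with exactly $n_1$ ones, independently of all potential outcomes and missingness indicators; probabilities are over $\boldsymbol Z$. Observed missingness $M_i=Z_iM_i(1)+(1-Z_i)M_i(0)$; the realized outcome $Z_iY_i^\star(1)+(1-Z_i)Y_i^\star(0)$ is observed, and denoted $Y_i$, only when $M_i=1$. Test statistics: $\overline{\mathbb R}=\mathbb R\cup\{\pm\infty\}$; for $1\le i,j\le n$, $y,y'\in\overline{\mathbb R}$, $\psi_{i,j}(y,y')=\mathbf 1\{y>y'\}+\mathbf 1\{y=y'\}\mathbf 1\{i\ge j\}$; $\mathrm{rank}_i(\boldsymbol y)=\sum_{j=1}^n\psi_{i,j}(y_i,y_j)$. $\phi$ is a fixed nondecreasing real function on the nonnegative integers. $t_{\mathrm R,\phi}(\boldsymbol z,\boldsymbol y)$ is either $\sum_i z_i\phi(\mathrm{rank}_i(\boldsymbol y))$ (rank-sum) or $\sum_i z_i\phi\big(\sum_j(1-z_j)\psi_{i,j}(y_i,y_j)\big)$ (Mann–Whitney type); the result holds for either. $G_{\mathrm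 R,\phi}(c)=\mathbb P(t_{\mathrm R,\phi}(\boldsymbol A,\boldsymbol y_0)\ge c)$ with $\boldsymbol A$ from the CRE and $\boldsymbol y_0\in\mathbb R^n$ any fixed vector (independent of the choice of $\boldsymbol y_0$). *)

theory Defs
  imports "HOL-Probability.Probability"
begin

(* Units are indexed 0..n-1 (order-preserving relabelling of 1..n).
   An assignment Z is represented by the set of treated units. *)

definition cre :: "nat \<Rightarrow> nat \<Rightarrow> nat set set" where
  "cre n n1 = {Z. Z \<subseteq> {..<n} \<and> card Z = n1}"

definition cre_prob :: "nat \<Rightarrow> nat \<Rightarrow> (nat set \<Rightarrow> bool) \<Rightarrow> real" where
  "cre_prob n n1 P = measure_pmf.prob (pmf_of_set (cre n n1)) {Z. P Z}"

definition psi :: "nat \<Rightarrow> nat \<Rightarrow> ereal \<Rightarrow> ereal \<Rightarrow> nat" where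
  "psi i j y y' = (if y > y' then 1 else 0) + (if y = y' \<and> i \<ge> j then 1 else 0)"

definition rank :: "nat \<Rightarrow> (nat \<Rightarrow> ereal) \<Rightarrow> nat \<Rightarrow> nat" where
  "rank n y i = (\<Sum>j<n. psi i j (y i) (y j))"

datatype stat_kind = RankSum | MannWhitney

definition t_R :: "stat_kind \<Rightarrow> (nat \<Rightarrow> real) \<Rightarrow> nat \<Rightarrow> nat set \<Rightarrow> (nat \<Rightarrow> ereal) \<Rightarrow> real" where
  "t_R k phi n Z y =
     (case k of
        RankSum \<Rightarrow> (\<Sum>i\<in>Z \<inter> {..<n}. phi (rank n y i))
      | MannWhitney \<Rightarrow> (\<Sum>i\<in>Z \<inter> {..<n}. phi (\<Sum>j\<in>{..<n} - Z. psi i j (y i) (y j))))"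

(* G_{R,phi}(c) computed with a fixed real vector y0 *)
definition G_R :: "stat_kind \<Rightarrow> (nat \<Rightarrow> real) \<Rightarrow> nat \<Rightarrow> nat \<Rightarrow> (nat \<Rightarrow> real) \<Rightarrow> real \<Rightarrow> real" where
  "G_R k phi n n1 y0 c = cre_prob n n1 (\<lambda>A. t_R k phi n A (\<lambda>i. ereal (y0 i)) \<ge> c)"

(* imputed control vector \<tilde>Y^g_{Z,\<delta>,b}(0); observed M_i and Y_i are
   determined by Z and the potential quantities *)
definition Ytil_g :: "(nat \<Rightarrow> real) \<Rightarrow> (nat \<Rightarrow> real) \<Rightarrow> (nat \<Rightarrow> bool) \<Rightarrow> (nat \<Rightarrow> bool)
     \<Rightarrow> (nat \<Rightarrow> real) \<Rightarrow> real \<Rightarrow> nat set \<Rightarrow> nat \<Rightarrow> ereal" where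
  "Ytil_g Y1 Y0 M1 M0 \<delta> b Z i =
     (if i \<in> Z then (if M1 i then min (ereal (Y1 i - \<delta> i)) (ereal b) else -\<infinity>)
      else (if M0 i then ereal (Y0 i) else ereal b))"

end

theory Submission
  imports Defs
begin

definition RR :: "(nat \<Rightarrow> ereal) \<Rightarrow> nat \<Rightarrow> nat \<Rightarrow> bool" where
  "RR y j i \<longleftrightarrow> y j < y i \<or> (y j = y i \<and> j \<le> i)"

lemma psi_eq: "psi i j (y i) (y j) = (if RR y j i then 1 else 0)"
  unfolding psi_def RR_def by auto

lemma rank_eq: "rank n y i = card {j\<in>{..<n}. RR y j i}"
proof -
  have "rank n y i = (\<Sum>j<n. if RR y j i then 1 else 0)"
    unfolding rank_def by (simp add: psi_eq)
  also have "\<dots> = card {j\<in>{..<n}. RR y j i}"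
    apply (simp add: sum.If_cases)
    apply (rule arg_cong[where f=card])
    by auto
  finally show ?thesis .
qed

lemma RR_refl: "RR y i i" unfolding RR_def by auto
lemma RR_antisym: "RR y i j \<Longrightarrow> RR y j i \<Longrightarrow> i = j" unfolding RR_def by auto
lemma RR_trans: "RR y i j \<Longrightarrow> RR y j l \<Longrightarrow> RR y i l" unfolding RR_def by auto
lemma RR_total: "RR y i j \<or> RR y j i" unfolding RR_def by auto

lemma rank_strict:
  assumes "i < n" "j < n" "RR y j i" "j \<noteq> i"
  shows "rank n y j < rank n y i"
proof -
  have sub: "{l\<in>{..<n}. RR y l j} \<subseteq> {l\<in>{..<n}. RR y l i}"
  proof
    fix l assume "l \<in> {l\<in>{..<n}. RR y l j}"
    then have "l < n" "RR y l j" by auto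
    then show "l \<in> {l\<in>{..<n}. RR y l i}" using RR_trans[OF _ assms(3)] by simp
  qed
  have "i \<in> {l\<in>{..<n}. RR y l i}" using assms(1) RR_refl[of y i] by simp
  moreover have "i \<notin> {l\<in>{..<n}. RR y l j}"
  proof
    assume "i \<in> {l\<in>{..<n}. RR y l j}"
    then have "RR y i j" by simp
    then have "i = j" using RR_antisym[OF _ assms(3)] by simp
    then show False using assms(4) by simp
  qed
  ultimately have "{l\<in>{..<n}. RR y l j} \<subset> {l\<in>{..<n}. RR y l i}" using sub by blast
  then show ?thesis unfolding rank_eq by (simp add: psubset_card_mono)
qed

lemma rank_le_iff:
  assumes "i < n" "j < n"
  shows "RR y j i \<longleftrightarrow> rank n y j \<le> rank n y i"
proof (cases "i = j")
  case True then show ?thesis using RR_refl by simp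
next
  case False
  show ?thesis
  proof
    assume "RR y j i" then show "rank n y j \<le> rank n y i"
      using rank_strict[OF assms] False by fastforce
  next
    assume h: "rank n y j \<le> rank n y i"
    show "RR y j i"
    proof (rule ccontr)
      assume "\<not> RR y j i"
      then have "RR y i j" using RR_total by blast
      then have "rank n y i < rank n y j" using rank_strict[OF assms(2,1)] False by blast
      then show False using h by simp
    qed
  qed
qed

lemma rank_inj: "inj_on (rank n y) {..<n}"
proof (rule inj_onI)
  fix i j assume ij: "i \<in> {..<n}" "j \<in> {..<n}" "rank n y i = rank n y j"
  show "i = j"
  proof (rule ccontr)
    assume ne: "i \<noteq> j"
    have "i < n" "j < n" using ij by auto
    show False
    proof (cases "RR y j i")
      case True
      then have "rank n y j < rank n y i" using rank_strict[OF \<open>i < n\<close> \<open>j < n\<close>] ne by simp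
      then show False using ij(3) by simp
    next
      case False
      then have "RR y i j" using RR_total[of y i j] by simp
      then have "rank n y i < rank n y j" using rank_strict[OF \<open>j < n\<close> \<open>i < n\<close>] ne by simp
      then show False using ij(3) by simp
    qed
  qed
qed

lemma rank_range: "i < n \<Longrightarrow> rank n y i \<in> {1..n}"
proof -
  assume i: "i < n"
  have fin: "finite {j\<in>{..<n}. RR y j i}" by simp
  have "i \<in> {j\<in>{..<n}. RR y j i}" using i RR_refl[of y i] by simp
  then have "{j\<in>{..<n}. RR y j i} \<noteq> {}" by blast
  then have "0 < card {j\<in>{..<n}. RR y j i}" using fin by (simp add: card_gt_0_iff)
  moreover have "card {j\<in>{..<n}. RR y j i} \<le> card {..<n}"
    by (rule card_mono) auto
  ultimately show ?thesis unfolding rank_eq by simp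
qed

lemma rank_bij: "bij_betw (rank n y) {..<n} {1..n}"
proof -
  have "rank n y ` {..<n} \<subseteq> {1..n}" using rank_range by auto
  moreover have "card (rank n y ` {..<n}) = card {1..n}"
    using card_image[OF rank_inj] by simp
  ultimately have "rank n y ` {..<n} = {1..n}"
    by (simp add: card_subset_eq)
  then show ?thesis using rank_inj unfolding bij_betw_def by simp
qed

definition HS :: "stat_kind \<Rightarrow> (nat \<Rightarrow> real) \<Rightarrow> nat \<Rightarrow> nat set \<Rightarrow> real" where
  "HS k phi n B = (case k of
      RankSum \<Rightarrow> (\<Sum>r\<in>B. phi r)
    | MannWhitney \<Rightarrow> (\<Sum>r\<in>B. phi (card {s\<in>{1..n} - B. s \<le> r})))"

lemma mw_card:
  assumes Z: "Z \<subseteq> {..<n}" and i: "i \<in> Z"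
  shows "(\<Sum>j\<in>{..<n} - Z. psi i j (y i) (y j))
     = card {s\<in>{1..n} - rank n y ` Z. s \<le> rank n y i}"
proof -
  let ?s = "rank n y"
  have b: "bij_betw ?s {..<n} {1..n}" by (rule rank_bij)
  have "(\<Sum>j\<in>{..<n} - Z. psi i j (y i) (y j)) = (\<Sum>j\<in>{..<n} - Z. if RR y j i then 1 else 0)"
    by (rule sum.cong) (simp_all add: psi_eq)
  also have "\<dots> = card {j\<in>{..<n} - Z. RR y j i}"
    by (simp add: sum.inter_filter[symmetric])
  also have "\<dots> = card (?s ` {j\<in>{..<n} - Z. RR y j i})"
    by (rule card_image[symmetric], rule inj_on_subset[OF rank_inj]) auto
  also have "card (?s ` {j\<in>{..<n} - Z. RR y j i}) = card {s\<in>{1..n} - ?s ` Z. s \<le> ?s i}"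
  proof (rule arg_cong[where f=card], rule)
    show "?s ` {j\<in>{..<n} - Z. RR y j i} \<subseteq> {s\<in>{1..n} - ?s ` Z. s \<le> ?s i}"
    proof
      fix s assume "s \<in> ?s ` {j\<in>{..<n} - Z. RR y j i}"
      then obtain j where j: "j < n" "j \<notin> Z" "RR y j i" "s = ?s j" by auto
      have "s \<in> {1..n}" using j rank_range by auto
      moreover have "s \<notin> ?s ` Z"
      proof
        assume "s \<in> ?s ` Z"
        then obtain l where "l \<in> Z" "?s l = ?s j" using j(4) by blast
        moreover have "l \<in> {..<n}" using \<open>l \<in> Z\<close> Z by blast
        ultimately have "l = j" using inj_onD[OF rank_inj[of n y]] j(1) by simp
        then show False using j \<open>l \<in> Z\<close> by simp
      qed
      moreover have "i < n" using Z i by auto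
      moreover have "s \<le> ?s i" using rank_le_iff[of i n j y] j \<open>i < n\<close> by simp
      ultimately show "s \<in> {s\<in>{1..n} - ?s ` Z. s \<le> ?s i}" by simp
    qed
  next
    show "{s\<in>{1..n} - ?s ` Z. s \<le> ?s i} \<subseteq> ?s ` {j\<in>{..<n} - Z. RR y j i}"
    proof
      fix s assume s: "s \<in> {s\<in>{1..n} - ?s ` Z. s \<le> ?s i}"
      have "s \<in> ?s ` {..<n}" using s b unfolding bij_betw_def by simp
      then obtain j where j: "j < n" "s = ?s j" by auto
      have "j \<notin> Z" using s j by blast
      moreover have "i < n" using Z i by auto
      moreover have "RR y j i" using rank_le_iff[of i n j y] j \<open>i < n\<close> s by simp
      ultimately show "s \<in> ?s ` {j\<in>{..<n} - Z. RR y j i}" using j by auto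
    qed
  qed
  finally show ?thesis .
qed

lemma t_R_HS:
  assumes Z: "Z \<subseteq> {..<n}"
  shows "t_R k phi n Z y = HS k phi n (rank n y ` Z)"
proof -
  have ZZ: "Z \<inter> {..<n} = Z" using Z by auto
  have inj: "inj_on (rank n y) Z" by (rule inj_on_subset[OF rank_inj Z])
  show ?thesis
  proof (cases k)
    case RankSum
    then show ?thesis unfolding t_R_def HS_def ZZ
      by (simp add: sum.reindex[OF inj])
  next
    case MannWhitney
    then show ?thesis unfolding t_R_def HS_def ZZ
      by (simp add: sum.reindex[OF inj] mw_card[OF Z])
  qed
qed

lemma cre_finite: "finite (cre n n1)"
  unfolding cre_def by (rule finite_subset[of _ "Pow {..<n}"]) auto

lemma cre_ne: "n1 \<le> n \<Longrightarrow> cre n n1 \<noteq> {}"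
  unfolding cre_def by (auto intro!: exI[of _ "{..<n1}"])

lemma cre_prob_card:
  assumes "n1 \<le> n"
  shows "cre_prob n n1 P = card {Z\<in>cre n n1. P Z} / card (cre n n1)"
proof -
  have "cre_prob n n1 P = card (cre n n1 \<inter> {Z. P Z}) / card (cre n n1)"
    unfolding cre_prob_def
    by (rule measure_pmf_of_set[OF cre_ne[OF assms] cre_finite])
  also have "cre n n1 \<inter> {Z. P Z} = {Z\<in>cre n n1. P Z}" by auto
  finally show ?thesis .
qed

lemma card_image_bij:
  assumes b: "bij_betw s {..<n} {1..n}"
  shows "card {Z\<in>cre n n1. P (s ` Z)} = card {B. B \<subseteq> {1..n} \<and> card B = n1 \<and> P B}"
proof -
  have inj: "inj_on s {..<n}" using b bij_betw_def by blast
  have i2: "inj_on (image s) {Z\<in>cre n n1. P (s ` Z)}"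
    by (rule inj_on_subset[OF inj_on_image_Pow[OF inj]]) (auto simp: cre_def)
  have "image s ` {Z\<in>cre n n1. P (s ` Z)} = {B. B \<subseteq> {1..n} \<and> card B = n1 \<and> P B}"
  proof
    show "image s ` {Z\<in>cre n n1. P (s ` Z)} \<subseteq> {B. B \<subseteq> {1..n} \<and> card B = n1 \<and> P B}"
    proof
      fix B assume "B \<in> image s ` {Z\<in>cre n n1. P (s ` Z)}"
      then obtain Z where Z: "Z \<subseteq> {..<n}" "card Z = n1" "P (s ` Z)" "B = s ` Z"
        unfolding cre_def by auto
      have "card B = n1" using Z card_image[OF inj_on_subset[OF inj Z(1)]] by simp
      moreover have "B \<subseteq> {1..n}" using Z b unfolding bij_betw_def by auto
      ultimately show "B \<in> {B. B \<subseteq> {1..n} \<and> card B = n1 \<and> P B}" using Z by auto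
    qed
  next
    show "{B. B \<subseteq> {1..n} \<and> card B = n1 \<and> P B} \<subseteq> image s ` {Z\<in>cre n n1. P (s ` Z)}"
    proof
      fix B assume B: "B \<in> {B. B \<subseteq> {1..n} \<and> card B = n1 \<and> P B}"
      then have "B \<subseteq> s ` {..<n}" using b unfolding bij_betw_def by auto
      then obtain Z where Z: "Z \<subseteq> {..<n}" "B = s ` Z" by (auto simp: subset_image_iff)
      have "card Z = n1" using Z B card_image[OF inj_on_subset[OF inj Z(1)]] by simp
      then show "B \<in> image s ` {Z\<in>cre n n1. P (s ` Z)}" using Z B unfolding cre_def by auto
    qed
  qed
  note eq = this
  show ?thesis by (simp only: card_image[OF i2, symmetric] eq)
qed

lemma G_indep_aux:
  assumes "n1 \<le> n"
  shows "cre_prob n n1 (\<lambda>A. t_R k phi n A y \<ge> c)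
      = card {B. B \<subseteq> {1..n} \<and> card B = n1 \<and> HS k phi n B \<ge> c} / card (cre n n1)"
proof -
  have e: "{Z\<in>cre n n1. t_R k phi n Z y \<ge> c} = {Z\<in>cre n n1. HS k phi n (rank n y ` Z) \<ge> c}"
  proof (rule Collect_cong)
    fix Z show "(Z \<in> cre n n1 \<and> t_R k phi n Z y \<ge> c) = (Z \<in> cre n n1 \<and> HS k phi n (rank n y ` Z) \<ge> c)"
      using t_R_HS[of Z n k phi y] unfolding cre_def by auto
  qed
  have c: "card {Z\<in>cre n n1. HS k phi n (rank n y ` Z) \<ge> c} = card {B. B \<subseteq> {1..n} \<and> card B = n1 \<and> HS k phi n B \<ge> c}"
    by (rule card_image_bij[where s="rank n y" and n=n and ?n1.0=n1 and P="\<lambda>B. HS k phi n B \<ge> c", OF rank_bij])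
  show ?thesis unfolding cre_prob_card[OF assms] e c ..
qed

lemma G_indep:
  assumes "n1 \<le> n"
  shows "G_R k phi n n1 y0 c = cre_prob n n1 (\<lambda>A. t_R k phi n A w \<ge> c)"
  unfolding G_R_def G_indep_aux[OF assms] ..


lemma RR_lower:
  assumes "y' l \<le> y l" "y' j = y j" "RR y l j"
  shows "RR y' l j"
proof (cases "y l < y j")
  case True
  then have "y' l < y' j" using assms(1,2) le_less_trans by metis
  then show ?thesis unfolding RR_def by simp
next
  case False
  then have e: "y l = y j" "l \<le> j" using assms(3) unfolding RR_def by auto
  show ?thesis
  proof (cases "y' l < y l")
    case True then show ?thesis using e assms(2) unfolding RR_def by simp
  next
    case False then have "y' l = y l" using assms(1) by simp
    then show ?thesis using e assms(2) unfolding RR_def by simp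
  qed
qed

lemma RR_raise:
  assumes "y' i \<le> y i" "y' j = y j" "RR y' j i"
  shows "RR y j i"
proof (cases "y' j < y' i")
  case True
  then have "y j < y i" using assms(1,2) less_le_trans by metis
  then show ?thesis unfolding RR_def by simp
next
  case False
  then have e: "y' j = y' i" "j \<le> i" using assms(3) unfolding RR_def by auto
  show ?thesis
  proof (cases "y' i < y i")
    case True then have "y j < y i" using e assms(2) by simp
    then show ?thesis unfolding RR_def by simp
  next
    case False then have "y' i = y i" using assms(1) by simp
    then show ?thesis using e assms(2) unfolding RR_def by simp
  qed
qed

lemma psi_sum_card:
  assumes "finite A"
  shows "(\<Sum>j\<in>A. psi i j (y i) (y j)) = card {j\<in>A. RR y j i}"
proof -
  have "(\<Sum>j\<in>A. psi i j (y i) (y j)) = (\<Sum>j\<in>A. if RR y j i then 1 else 0)"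
    by (rule sum.cong) (simp_all add: psi_eq)
  also have "\<dots> = card {j\<in>A. RR y j i}"
    using assms by (simp add: sum.inter_filter[symmetric])
  finally show ?thesis .
qed

lemma abel:
  fixes phi :: "nat \<Rightarrow> real" and a a' :: "'a \<Rightarrow> nat"
  assumes mono: "mono phi" and fin: "finite Z"
    and a: "\<forall>i\<in>Z. a i \<le> n" and a': "\<forall>i\<in>Z. a' i \<le> n"
    and cnt: "\<forall>m. card {i\<in>Z. m \<le> a' i} \<le> card {i\<in>Z. m \<le> a i}"
  shows "(\<Sum>i\<in>Z. phi (a' i)) \<le> (\<Sum>i\<in>Z. phi (a i))"
proof -
  define D where "D m = phi m - phi (m - 1)" for m
  have D0: "0 \<le> D m" for m
    unfolding D_def using monoD[OF mono, of "m - 1" m] by simp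
  have tel: "phi r = phi 0 + (\<Sum>m\<in>{1..r}. D m)" for r
  proof (induction r)
    case 0 then show ?case by simp
  next
    case (Suc r)
    have "{1..Suc r} = insert (Suc r) {1..r}" by auto
    then have "(\<Sum>m\<in>{1..Suc r}. D m) = D (Suc r) + (\<Sum>m\<in>{1..r}. D m)" by simp
    then show ?case using Suc.IH unfolding D_def by simp
  qed
  have dec: "phi r = phi 0 + (\<Sum>m\<in>{1..n}. if m \<le> r then D m else 0)" if "r \<le> n" for r
  proof -
    have "(\<Sum>m\<in>{1..n}. if m \<le> r then D m else 0) = (\<Sum>m\<in>{m\<in>{1..n}. m \<le> r}. D m)"
      by (rule sum.inter_filter[symmetric]) simp
    also have "{m\<in>{1..n}. m \<le> r} = {1..r}" using that by auto
    finally show ?thesis using tel[of r] by simp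
  qed
  have S: "(\<Sum>i\<in>Z. phi (b i)) = card Z * phi 0 + (\<Sum>m\<in>{1..n}. D m * card {i\<in>Z. m \<le> b i})"
    if hb: "\<forall>i\<in>Z. b i \<le> n" for b :: "'a \<Rightarrow> nat"
  proof -
    have "(\<Sum>i\<in>Z. phi (b i)) = (\<Sum>i\<in>Z. phi 0 + (\<Sum>m\<in>{1..n}. if m \<le> b i then D m else 0))"
    proof (rule sum.cong)
      fix i assume "i \<in> Z"
      then have "b i \<le> n" using hb by simp
      then show "phi (b i) = phi 0 + (\<Sum>m\<in>{1..n}. if m \<le> b i then D m else 0)" by (rule dec)
    qed simp
    also have "\<dots> = card Z * phi 0 + (\<Sum>i\<in>Z. \<Sum>m\<in>{1..n}. if m \<le> b i then D m else 0)"
      by (simp add: sum.distrib)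
    also have "(\<Sum>i\<in>Z. \<Sum>m\<in>{1..n}. if m \<le> b i then D m else 0)
        = (\<Sum>m\<in>{1..n}. \<Sum>i\<in>Z. if m \<le> b i then D m else 0)"
      by (rule sum.swap)
    also have "\<dots> = (\<Sum>m\<in>{1..n}. D m * card {i\<in>Z. m \<le> b i})"
    proof (rule sum.cong)
      fix m
      have "(\<Sum>i\<in>Z. if m \<le> b i then D m else 0) = (\<Sum>i\<in>{i\<in>Z. m \<le> b i}. D m)"
        using fin by (rule sum.inter_filter[symmetric])
      also have "\<dots> = D m * card {i\<in>Z. m \<le> b i}" by simp
      finally show "(\<Sum>i\<in>Z. if m \<le> b i then D m else 0) = D m * card {i\<in>Z. m \<le> b i}" .
    qed simp
    finally show ?thesis .
  qed
  have "(\<Sum>m\<in>{1..n}. D m * card {i\<in>Z. m \<le> a' i}) \<le> (\<Sum>m\<in>{1..n}. D m * card {i\<in>Z. m \<le> a i})"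
  proof (rule sum_mono)
    fix m
    show "D m * card {i\<in>Z. m \<le> a' i} \<le> D m * card {i\<in>Z. m \<le> a i}"
      using cnt D0[of m] by (simp add: mult_left_mono)
  qed
  then show ?thesis using S[OF a] S[OF a'] by simp
qed

lemma bij_count:
  assumes b: "bij_betw s A B" and fA: "finite A"
  shows "card {i\<in>A. P (s i)} = card {r\<in>B. P r}"
proof -
  have inj: "inj_on s {i\<in>A. P (s i)}" using b unfolding bij_betw_def by (auto intro: inj_on_subset)
  have "s ` {i\<in>A. P (s i)} = {r\<in>B. P r}" using b unfolding bij_betw_def by auto
  then show ?thesis using card_image[OF inj] by simp
qed

lemma ranksum_mono:
  fixes phi :: "nat \<Rightarrow> real"
  assumes Z: "Z \<subseteq> {..<n}" and eqc: "\<forall>j<n. j \<notin> Z \<longrightarrow> y' j = y j"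
    and le: "\<forall>i\<in>Z. y' i \<le> y i" and mono: "mono phi"
  shows "(\<Sum>i\<in>Z. phi (rank n y' i)) \<le> (\<Sum>i\<in>Z. phi (rank n y i))"
proof (rule abel[OF mono, where n=n])
  show fZ: "finite Z" using Z finite_subset by blast
  have rle: "rank n v i \<le> n" if "i \<in> Z" for v i
  proof -
    have "i < n" using Z that by auto
    then show ?thesis using rank_range[of i n v] by simp
  qed
  show "\<forall>i\<in>Z. rank n y i \<le> n" using rle by blast
  show "\<forall>i\<in>Z. rank n y' i \<le> n" using rle by blast
  have lel: "y' l \<le> y l" if "l < n" for l
    using le eqc that by (cases "l \<in> Z") auto
  have ctrl: "rank n y j \<le> rank n y' j" if "j < n" "j \<notin> Z" for j
  proof -
    have "{l\<in>{..<n}. RR y l j} \<subseteq> {l\<in>{..<n}. RR y' l j}"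
    proof
      fix l assume "l \<in> {l\<in>{..<n}. RR y l j}"
      then have "l < n" "RR y l j" by auto
      then show "l \<in> {l\<in>{..<n}. RR y' l j}"
        using RR_lower[of y' l y j] lel eqc that by simp
    qed
    then have "card {l\<in>{..<n}. RR y l j} \<le> card {l\<in>{..<n}. RR y' l j}"
      by (intro card_mono) simp_all
    then show ?thesis unfolding rank_eq .
  qed
  have tot: "card {i\<in>{..<n}. m \<le> rank n v i} = card {r\<in>{1..n}. m \<le> r}" for v m
    using bij_count[OF rank_bij, of n "\<lambda>r. m \<le> r" v] by simp
  have split: "card {i\<in>{..<n}. m \<le> rank n v i}
      = card {i\<in>Z. m \<le> rank n v i} + card {i\<in>{..<n} - Z. m \<le> rank n v i}" for v m
  proof -
    have "{i\<in>{..<n}. m \<le> rank n v i} = {i\<in>Z. m \<le> rank n v i} \<union> {i\<in>{..<n} - Z. m \<le> rank n v i}"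
      using Z by auto
    moreover have "card ({i\<in>Z. m \<le> rank n v i} \<union> {i\<in>{..<n} - Z. m \<le> rank n v i})
        = card {i\<in>Z. m \<le> rank n v i} + card {i\<in>{..<n} - Z. m \<le> rank n v i}"
      by (rule card_Un_disjoint) (use fZ in auto)
    ultimately show ?thesis by simp
  qed
  show "\<forall>m. card {i\<in>Z. m \<le> rank n y' i} \<le> card {i\<in>Z. m \<le> rank n y i}"
  proof
    fix m
    have "card {i\<in>{..<n} - Z. m \<le> rank n y i} \<le> card {i\<in>{..<n} - Z. m \<le> rank n y' i}"
    proof (rule card_mono)
      show "{i\<in>{..<n} - Z. m \<le> rank n y i} \<subseteq> {i\<in>{..<n} - Z. m \<le> rank n y' i}"
      proof
        fix i assume "i \<in> {i\<in>{..<n} - Z. m \<le> rank n y i}"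
        then have i: "i < n" "i \<notin> Z" "m \<le> rank n y i" by auto
        then have "m \<le> rank n y' i" using ctrl[OF i(1,2)] by linarith
        then show "i \<in> {i\<in>{..<n} - Z. m \<le> rank n y' i}" using i by simp
      qed
    qed simp
    then show "card {i\<in>Z. m \<le> rank n y' i} \<le> card {i\<in>Z. m \<le> rank n y i}"
      using split[of m y] split[of m y'] tot[of m y] tot[of m y'] by linarith
  qed
qed

lemma stat_mono:
  fixes phi :: "nat \<Rightarrow> real"
  assumes Z: "Z \<subseteq> {..<n}" and eqc: "\<forall>j<n. j \<notin> Z \<longrightarrow> y' j = y j"
    and le: "\<forall>i\<in>Z. y' i \<le> y i" and mono: "mono phi"
  shows "t_R k phi n Z y' \<le> t_R k phi n Z y"
proof -
  have ZZ: "Z \<inter> {..<n} = Z" using Z by auto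
  show ?thesis
  proof (cases k)
    case RankSum
    then show ?thesis unfolding t_R_def ZZ using ranksum_mono[OF Z eqc le mono] by simp
  next
    case MannWhitney
    have "(\<Sum>i\<in>Z. phi (\<Sum>j\<in>{..<n} - Z. psi i j (y' i) (y' j)))
        \<le> (\<Sum>i\<in>Z. phi (\<Sum>j\<in>{..<n} - Z. psi i j (y i) (y j)))"
    proof (rule sum_mono)
      fix i assume i: "i \<in> Z"
      have "card {j\<in>{..<n} - Z. RR y' j i} \<le> card {j\<in>{..<n} - Z. RR y j i}"
      proof (rule card_mono)
        show "{j\<in>{..<n} - Z. RR y' j i} \<subseteq> {j\<in>{..<n} - Z. RR y j i}"
        proof
          fix j assume "j \<in> {j\<in>{..<n} - Z. RR y' j i}"
          then have j: "j < n" "j \<notin> Z" "RR y' j i" by auto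
          have "RR y j i" using RR_raise[of y' i y j] le i eqc j by simp
          then show "j \<in> {j\<in>{..<n} - Z. RR y j i}" using j by simp
        qed
      qed simp
      then show "phi (\<Sum>j\<in>{..<n} - Z. psi i j (y' i) (y' j)) \<le> phi (\<Sum>j\<in>{..<n} - Z. psi i j (y i) (y j))"
        using monoD[OF mono] by (simp add: psi_sum_card)
    qed
    then show ?thesis unfolding t_R_def ZZ using MannWhitney by simp
  qed
qed

theorem theorem2:
  fixes n n1 :: nat and Y1 Y0 :: "nat \<Rightarrow> real" and M1 M0 :: "nat \<Rightarrow> bool"
    and \<delta> :: "nat \<Rightarrow> real" and b :: real and phi :: "nat \<Rightarrow> real"
    and k :: stat_kind and y0 :: "nat \<Rightarrow> real" and \<alpha> :: real
  assumes "0 < n1" and "n1 < n"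
    and "mono phi"
    and H: "\<forall>i<n. Y1 i - Y0 i = \<delta> i"
    and "0 < \<alpha>" and "\<alpha> < 1"
  shows "cre_prob n n1
           (\<lambda>Z. G_R k phi n n1 y0 (t_R k phi n Z (Ytil_g Y1 Y0 M1 M0 \<delta> b Z)) \<le> \<alpha>) \<le> \<alpha>"
proof -
  have n1n: "n1 \<le> n" using assms by simp
  define C where "C = cre n n1"
  define w :: "nat \<Rightarrow> ereal" where "w i = (if M0 i then ereal (Y0 i) else ereal b)" for i
  define W where "W Z = t_R k phi n Z w" for Z
  define T where "T Z = t_R k phi n Z (Ytil_g Y1 Y0 M1 M0 \<delta> b Z)" for Z
  define Gf where "Gf c = G_R k phi n n1 y0 c" for c
  have Npos: "0 < card C" unfolding C_def using cre_finite cre_ne[OF n1n] by (simp add: card_gt_0_iff)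
  have finC: "finite C" unfolding C_def by (rule cre_finite)
  have Gf_eq: "Gf c = card {Z\<in>C. c \<le> W Z} / card C" for c
    unfolding Gf_def W_def C_def G_indep[OF n1n, where w=w] cre_prob_card[OF n1n] ..
  have Gf_anti: "Gf c' \<le> Gf c" if "c \<le> c'" for c c'
  proof -
    have "card {Z\<in>C. c' \<le> W Z} \<le> card {Z\<in>C. c \<le> W Z}"
      by (rule card_mono) (use finC that in auto)
    then show ?thesis unfolding Gf_eq using Npos by (simp add: divide_right_mono)
  qed
  have TW: "T Z \<le> W Z" if "Z \<in> C" for Z
  proof -
    have Z: "Z \<subseteq> {..<n}" using that unfolding C_def cre_def by auto
    show ?thesis unfolding T_def W_def
    proof (rule stat_mono[OF Z _ _ assms(3)])
      show "\<forall>j<n. j \<notin> Z \<longrightarrow> Ytil_g Y1 Y0 M1 M0 \<delta> b Z j = w j"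
        unfolding Ytil_g_def w_def by auto
      show "\<forall>i\<in>Z. Ytil_g Y1 Y0 M1 M0 \<delta> b Z i \<le> w i"
      proof
        fix i assume i: "i \<in> Z"
        then have "Y1 i - \<delta> i = Y0 i" using H Z by force
        then show "Ytil_g Y1 Y0 M1 M0 \<delta> b Z i \<le> w i"
          unfolding Ytil_g_def w_def using i by (auto simp: min_def)
      qed
    qed
  qed
  define S where "S = {Z\<in>C. Gf (W Z) \<le> \<alpha>}"
  have sub: "{Z\<in>C. Gf (T Z) \<le> \<alpha>} \<subseteq> S"
  proof
    fix Z assume "Z \<in> {Z\<in>C. Gf (T Z) \<le> \<alpha>}"
    then have Z: "Z \<in> C" "Gf (T Z) \<le> \<alpha>" by auto
    have "Gf (W Z) \<le> Gf (T Z)" using Gf_anti[OF TW[OF Z(1)]] .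
    then show "Z \<in> S" unfolding S_def using Z by simp
  qed
  have finS: "finite S" unfolding S_def using finC by simp
  have "card S / card C \<le> \<alpha>"
  proof (cases "S = {}")
    case True then show ?thesis using assms by simp
  next
    case False
    define c where "c = Min (W ` S)"
    have "c \<in> W ` S" unfolding c_def using finS False by (intro Min_in) auto
    then obtain z0 where z0: "z0 \<in> S" "W z0 = c" by auto
    have "S \<subseteq> {Z\<in>C. c \<le> W Z}" unfolding c_def using finS by (auto simp: S_def)
    then have "card S \<le> card {Z\<in>C. c \<le> W Z}" using finC by (intro card_mono) auto
    then have "card S / card C \<le> Gf c" unfolding Gf_eq using Npos by (simp add: divide_right_mono)
    also have "Gf c \<le> \<alpha>" using z0 unfolding S_def by simp
    finally show ?thesis .
  qed
  moreover have "card {Z\<in>C. Gf (T Z) \<le> \<alpha>} \<le> card S" using finS sub by (rule card_mono)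
  ultimately have "card {Z\<in>C. Gf (T Z) \<le> \<alpha>} / card C \<le> \<alpha>"
  proof -
    assume a1: "card S / card C \<le> \<alpha>" and a2: "card {Z\<in>C. Gf (T Z) \<le> \<alpha>} \<le> card S"
    have "real (card {Z\<in>C. Gf (T Z) \<le> \<alpha>}) / card C \<le> real (card S) / card C"
      using a2 by (intro divide_right_mono) simp_all
    then show ?thesis using a1 by linarith
  qed
  then show ?thesis unfolding cre_prob_card[OF n1n] C_def T_def Gf_def .
qed

end
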